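(* Let $p_1>p_2$ be relatively prime positive integers. Then the set $\{S_c(p_1,p_2): c\in[0,1]\}$ of apportionment sequences of stationary divisor methods contains exactly $p_1-p_2+1$ distinct sequences.
   Context: Stationary divisor method with cut point $c\in[0,1]$ for votes $(p_1,p_2)$: seats are allocated one at a time. Initially $a_1=a_2=0$; each next seat goes to a party $i$ maximizing $p_i/(a_i+c)$, whose $a_i$ then increases by $1$. Ties are broken in favor of party $1$. For $c=0$ the convention is that $p_1/0>p_2/0$, and $p_i/0>p_j/k$ for $k>0$. $S_c(p_1,p_2)$ is the infinite sequence of party labels (in $\{1,2\}$) of successive seats. *)

theory Defs
  imports Complex_Main
begin

text \<open>Party i has priority p_i/(a_i+c); ties go to party 1.  A zero denominator
  (only possible for c = 0 and a_i = 0) gives infinite priority, with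
  p1/0 > p2/0.\<close>
definition prefer1 :: "real \<Rightarrow> real \<Rightarrow> real \<Rightarrow> nat \<Rightarrow> nat \<Rightarrow> bool" where
  "prefer1 c p1 p2 a1 a2 =
     (if real a1 + c = 0 then True
      else if real a2 + c = 0 then False
      else p1 / (real a1 + c) \<ge> p2 / (real a2 + c))"

fun alloc :: "real \<Rightarrow> real \<Rightarrow> real \<Rightarrow> nat \<Rightarrow> nat \<times> nat" where
  "alloc c p1 p2 0 = (0, 0)"
| "alloc c p1 p2 (Suc n) =
     (let (a1, a2) = alloc c p1 p2 n in
      if prefer1 c p1 p2 a1 a2 then (a1 + 1, a2) else (a1, a2 + 1))"

text \<open>The apportionment sequence S_c(p1,p2): the label (1 or 2) of the (n+1)-th seat.\<close>
definition S :: "real \<Rightarrow> real \<Rightarrow> real \<Rightarrow> nat \<Rightarrow> nat" where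
  "S c p1 p2 n = (let (a1, a2) = alloc c p1 p2 n in
                  if prefer1 c p1 p2 a1 a2 then 1 else 2)"

end

theory Submission
  imports Defs "HOL-Number_Theory.Cong"
begin

lemma pref_iff:
  fixes p1 p2 a1 a2 :: nat and c :: real
  assumes "0 \<le> c" "0 < p2" "p2 < p1"
  shows "prefer1 c (real p1) (real p2) a1 a2 \<longleftrightarrow>
         int p2 * int a1 - int p1 * int a2 \<le> \<lfloor>(real p1 - real p2) * c\<rfloor>"
proof -
  have A: "prefer1 c (real p1) (real p2) a1 a2 \<longleftrightarrow>
        real p2 * (real a1 + c) \<le> real p1 * (real a2 + c)"
  proof (cases "real a1 + c = 0")
    case True then show ?thesis using assms by (simp add: prefer1_def)
  next
    case F1: False
    show ?thesis
    proof (cases "real a2 + c = 0")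
      case True
      have "real a1 + c > 0" using F1 assms by simp
      then have "real p2 * (real a1 + c) > 0" using assms by simp
      then show ?thesis using True F1 by (simp add: prefer1_def)
    next
      case False
      have p: "real a1 + c > 0" "real a2 + c > 0" using F1 False assms by auto
      show ?thesis using F1 False p by (simp add: prefer1_def divide_simps mult.commute)
    qed
  qed
  also have "\<dots> \<longleftrightarrow> real_of_int (int p2 * int a1 - int p1 * int a2) \<le> (real p1 - real p2) * c"
    by (simp add: algebra_simps)
  also have "\<dots> \<longleftrightarrow> int p2 * int a1 - int p1 * int a2 \<le> \<lfloor>(real p1 - real p2) * c\<rfloor>"
    by (simp add: le_floor_iff)
  finally show ?thesis .
qed

lemma alloc_sum: "fst (alloc c p1 p2 n) + snd (alloc c p1 p2 n) = n"
  by (induction n) (auto split: prod.splits)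

lemma alloc_cong:
  assumes "\<And>a1 a2. prefer1 c p1 p2 a1 a2 = prefer1 c' p1 p2 a1 a2"
  shows "alloc c p1 p2 n = alloc c' p1 p2 n"
  using assms by (induction n) (auto split: prod.splits)

lemma S_alloc:
  assumes "S c p1 p2 = S c' p1 p2"
  shows "alloc c p1 p2 n = alloc c' p1 p2 n"
proof (induction n)
  case 0 then show ?case by simp
next
  case (Suc n)
  have "S c p1 p2 n = S c' p1 p2 n" using assms by simp
  then show ?case using Suc
    by (auto simp: S_def split: prod.splits if_splits)
qed

definition K :: "real \<Rightarrow> nat \<Rightarrow> nat \<Rightarrow> nat \<Rightarrow> int" where
  "K c p1 p2 n = int p2 * int (fst (alloc c p1 p2 n)) - int p1 * int (snd (alloc c p1 p2 n))"

lemma K_inv: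
  fixes p1 p2 :: nat and c :: real
  assumes "0 \<le> c" "c \<le> 1" "0 < p2" "p2 < p1"
  defines "m \<equiv> \<lfloor>(real p1 - real p2) * c\<rfloor>"
  shows "m - int p1 + 1 \<le> K c p1 p2 n \<and> K c p1 p2 n \<le> m + int p2"
proof (induction n)
  case 0
  have "0 \<le> m" using assms by (simp add: m_def)
  moreover have "(real p1 - real p2) * c \<le> real p1 - real p2"
    using assms by (simp add: mult_left_le)
  then have "m \<le> int p1 - int p2" unfolding m_def
    by (metis floor_mono floor_of_int of_int_diff of_int_of_nat_eq)
  ultimately show ?case using assms by (simp add: K_def)
next
  case (Suc n)
  obtain a1 a2 where al: "alloc c (real p1) (real p2) n = (a1, a2)" by fastforce
  have Kn: "K c p1 p2 n = int p2 * int a1 - int p1 * int a2" by (simp add: K_def al)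
  have pr: "prefer1 c (real p1) (real p2) a1 a2 \<longleftrightarrow> K c p1 p2 n \<le> m"
    using pref_iff[OF assms(1,3,4)] Kn m_def by simp
  show ?case
  proof (cases "K c p1 p2 n \<le> m")
    case True
    then have "K c p1 p2 (Suc n) = K c p1 p2 n + int p2"
      using pr al by (simp add: K_def Kn algebra_simps)
    then show ?thesis using Suc True by simp
  next
    case False
    then have "K c p1 p2 (Suc n) = K c p1 p2 n - int p1"
      using pr al by (simp add: K_def Kn algebra_simps)
    then show ?thesis using Suc False by simp
  qed
qed


lemma S_floor:
  fixes p1 p2 :: nat and c :: real
  assumes "0 \<le> c" "0 < p2" "p2 < p1"
  shows "S c (real p1) (real p2) =
         S (real_of_int \<lfloor>(real p1 - real p2) * c\<rfloor> / (real p1 - real p2)) (real p1) (real p2)"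
proof -
  let ?m = "\<lfloor>(real p1 - real p2) * c\<rfloor>"
  let ?c = "real_of_int ?m / (real p1 - real p2)"
  have d: "real p1 - real p2 > 0" using assms by simp
  have m0: "0 \<le> ?m" using assms by simp
  have c0: "0 \<le> ?c" using d m0 by simp
  have fl: "\<lfloor>(real p1 - real p2) * ?c\<rfloor> = ?m" using d by simp
  have P: "\<And>a1 a2. prefer1 c (real p1) (real p2) a1 a2 = prefer1 ?c (real p1) (real p2) a1 a2"
    using pref_iff[OF assms(1,2,3)] pref_iff[OF c0 assms(2,3)] fl by simp
  have "\<And>n. alloc c (real p1) (real p2) n = alloc ?c (real p1) (real p2) n"
    by (rule alloc_cong[OF P])
  then show ?thesis using P by (auto simp: S_def fun_eq_iff split: prod.splits)
qed

lemma hit: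
  fixes p1 p2 :: nat and c :: real
  assumes "0 \<le> c" "c \<le> 1" "0 < p2" "p2 < p1" "coprime p1 p2"
  defines "m \<equiv> \<lfloor>(real p1 - real p2) * c\<rfloor>"
  shows "\<exists>n. K c p1 p2 n = m + 1"
proof -
  have m0: "0 \<le> m" using assms by (simp add: m_def)
  have cop: "coprime p2 (p1 + p2)" using assms(5)
    by (metis add.commute coprime_commute coprime_iff_gcd_eq_1 gcd_add2)
  obtain x where x: "[p2 * x = Suc 0] (mod (p1 + p2))"
    using cong_solve_coprime_nat[OF cop] by blast
  define n where "n = x * nat (m + 1)"
  have "[p2 * n = 1 * nat (m + 1)] (mod (p1 + p2))"
    unfolding n_def using cong_mult[OF x cong_refl[of "nat (m+1)"]] by (simp add: mult.assoc)
  then have "[int (p2 * n) = int (nat (m + 1))] (mod int (p1 + p2))"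
    by (metis cong_int_iff mult_1)
  then have c1: "[int p2 * int n = m + 1] (mod int p1 + int p2)" using m0 by simp
  obtain a1 a2 where al: "alloc c (real p1) (real p2) n = (a1, a2)" by fastforce
  have "a1 + a2 = n" using alloc_sum[of c "real p1" "real p2" n] al by simp
  then have Kn: "K c p1 p2 n = int p2 * int n - (int p1 + int p2) * int a2"
    by (auto simp: K_def al algebra_simps)
  have "[K c p1 p2 n = int p2 * int n] (mod int p1 + int p2)"
    unfolding Kn by (simp add: cong_iff_dvd_diff)
  then have "[K c p1 p2 n = m + 1] (mod int p1 + int p2)"
    using c1 cong_trans by blast
  then have dv: "(int p1 + int p2) dvd (K c p1 p2 n - (m + 1))"
    by (simp add: cong_iff_dvd_diff)
  have bd: "m - int p1 + 1 \<le> K c p1 p2 n \<and> K c p1 p2 n \<le> m + int p2"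
    using K_inv[OF assms(1-4)] m_def by simp
  show ?thesis
  proof (rule exI, rule ccontr)
    assume ne: "K c p1 p2 n \<noteq> m + 1"
    obtain q where q: "K c p1 p2 n - (m + 1) = (int p1 + int p2) * q" using dv by blast
    have "q \<noteq> 0" using q ne by auto
    then have "q \<ge> 1 \<or> q \<le> -1" by linarith
    then show False
    proof
      assume "q \<ge> 1"
      then have "(int p1 + int p2) * q \<ge> int p1 + int p2"
        by (metis mult.right_neutral mult_left_mono of_nat_0_le_iff add_nonneg_nonneg)
      then show False using q bd by linarith
    next
      assume "q \<le> -1"
      then have "(int p1 + int p2) * q \<le> -(int p1 + int p2)"
        by (metis mult.right_neutral mult_left_mono of_nat_0_le_iff add_nonneg_nonneg mult_minus_right)
      then show False using q bd assms(3) by linarith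
    qed
  qed
qed


theorem mainTheorem14:
  fixes p1 p2 :: nat
  assumes "0 < p2" and "p2 < p1" and "coprime p1 p2"
  shows "card {S c (real p1) (real p2) | c :: real. 0 \<le> c \<and> c \<le> 1} = p1 - p2 + 1"
proof -
  define D where "D = real p1 - real p2"
  have D0: "D > 0" using assms by (simp add: D_def)
  have Dn: "D = real (p1 - p2)" using assms by (simp add: D_def of_nat_diff)
  define f where "f = (\<lambda>m::int. S (real_of_int m / D) (real p1) (real p2))"
  have cm: "0 \<le> real_of_int m / D \<and> real_of_int m / D \<le> 1" if "m \<in> {0..int (p1 - p2)}" for m
  proof -
    have "real_of_int m \<le> D" using that Dn by simp
    then show ?thesis using that D0 by simp
  qed
  have fl: "\<lfloor>D * (real_of_int m / D)\<rfloor> = m" for m using D0 by simp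
  have eq: "{S c (real p1) (real p2) | c :: real. 0 \<le> c \<and> c \<le> 1} = f ` {0..int (p1 - p2)}"
  proof (intro equalityI subsetI)
    fix s assume "s \<in> {S c (real p1) (real p2) | c :: real. 0 \<le> c \<and> c \<le> 1}"
    then obtain c where c: "0 \<le> c" "c \<le> 1" "s = S c (real p1) (real p2)" by blast
    have "s = f \<lfloor>D * c\<rfloor>" using S_floor[OF c(1) assms(1,2)] c(3) by (simp add: f_def D_def)
    moreover have "0 \<le> \<lfloor>D * c\<rfloor>" using c D0 by simp
    moreover have "D * c \<le> D" using c D0 by (simp add: mult_left_le)
    then have "\<lfloor>D * c\<rfloor> \<le> int (p1 - p2)" using Dn
      by (metis floor_mono floor_of_nat)
    ultimately show "s \<in> f ` {0..int (p1 - p2)}" by auto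
  next
    fix s assume "s \<in> f ` {0..int (p1 - p2)}"
    then obtain m where "m \<in> {0..int (p1 - p2)}" "s = f m" by blast
    then show "s \<in> {S c (real p1) (real p2) | c :: real. 0 \<le> c \<and> c \<le> 1}"
      using cm unfolding f_def by blast
  qed
  have inj_aux: False if m: "m \<in> {0..int (p1 - p2)}" "m' \<in> {0..int (p1 - p2)}" "m < m'"
      and fe: "f m = f m'" for m m'
  proof -
    define c where "c = real_of_int m / D"
    define c' where "c' = real_of_int m' / D"
    have c1: "0 \<le> c" "c \<le> 1" using cm[OF m(1)] c_def by auto
    have c2: "0 \<le> c'" "c' \<le> 1" using cm[OF m(2)] c'_def by auto
    have fc: "\<lfloor>(real p1 - real p2) * c\<rfloor> = m" using fl c_def D_def by simp
    have fc': "\<lfloor>(real p1 - real p2) * c'\<rfloor> = m'" using fl c'_def D_def by simp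
    have SS: "S c (real p1) (real p2) = S c' (real p1) (real p2)"
      using fe by (simp add: f_def c_def c'_def)
    obtain n where n: "K c p1 p2 n = m + 1" using hit[OF c1 assms] fc by auto
    obtain a1 a2 where al: "alloc c (real p1) (real p2) n = (a1, a2)" by fastforce
    have al': "alloc c' (real p1) (real p2) n = (a1, a2)" using S_alloc[OF SS, of n] al by simp
    have Kn: "int p2 * int a1 - int p1 * int a2 = m + 1" using n al by (simp add: K_def)
    have "\<not> prefer1 c (real p1) (real p2) a1 a2"
      using pref_iff[OF c1(1) assms(1,2)] fc Kn by simp
    moreover have "prefer1 c' (real p1) (real p2) a1 a2"
      using pref_iff[OF c2(1) assms(1,2)] fc' Kn m(3) by simp
    ultimately have "S c (real p1) (real p2) n \<noteq> S c' (real p1) (real p2) n"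
      using al al' by (simp add: S_def)
    then show False using SS by simp
  qed
  have "inj_on f {0..int (p1 - p2)}"
  proof (rule inj_onI)
    fix m m' assume "m \<in> {0..int (p1 - p2)}" "m' \<in> {0..int (p1 - p2)}" "f m = f m'"
    then show "m = m'" using inj_aux[of m m'] inj_aux[of m' m] by (cases "m < m'"; cases "m' < m") auto
  qed
  then have "card (f ` {0..int (p1 - p2)}) = card {0..int (p1 - p2)}" by (rule card_image)
  also have "\<dots> = p1 - p2 + 1" by simp
  finally show ?thesis using eq by simp
qed

end
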